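(* Let $n$ be a positive integer. Every $\alpha \in \mathcal{M}_n$ can be realized as $\alpha=\mu_n(\xi,\xi')$ for some reals $\xi\neq\xi'$ for which the supremum defining $\mu_n(\xi,\xi')$ is attained at some $(s,t) \in \mathbb{Z}^2 \setminus \{0\}$.
   Context: For reals $\xi\ne\xi'$ and a positive integer $n$, $\mu_n(\xi,\xi') = \sup_{(s,t)\in\mathbb{Z}^2\setminus\{0\}} \dfrac{\gcd(t,n)\,|\xi-\xi'|}{|s-t\xi|\,|s-t\xi'|} \in\mathbb{R}\cup\{\infty\}$ (with $\gcd(0,n)=n$), and $\mathcal{M}_n$ is the set of finite values of $\mu_n(\xi,\xi')$ over pairs of reals $\xi\neq\xi'$. *)

theory Defs
  imports "HOL-Analysis.Analysis" "HOL-Library.Extended_Real"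
begin

definition mu_term :: "nat \<Rightarrow> real \<Rightarrow> real \<Rightarrow> int \<Rightarrow> int \<Rightarrow> ereal" where
  "mu_term n \<xi> \<xi>' s t =
     (if \<bar>s - t * \<xi>\<bar> * \<bar>s - t * \<xi>'\<bar> = 0 then \<infinity>
      else ereal (real_of_int (gcd t (int n)) * \<bar>\<xi> - \<xi>'\<bar>
                  / (\<bar>s - t * \<xi>\<bar> * \<bar>s - t * \<xi>'\<bar>)))"

definition mu :: "nat \<Rightarrow> real \<Rightarrow> real \<Rightarrow> ereal" where
  "mu n \<xi> \<xi>' = (SUP st \<in> (UNIV :: (int \<times> int) set) - {(0, 0)}. mu_term n \<xi> \<xi>' (fst st) (snd st))"

definition M :: "nat \<Rightarrow> real set" where
  "M n = {\<alpha>. \<exists>\<xi> \<xi>'. \<xi> \<noteq> \<xi>' \<and> mu n \<xi> \<xi>' = ereal \<alpha>}"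

end

theory Submission imports Defs "HOL-Real_Asymp.Real_Asymp"
begin

definition Qf :: "real \<Rightarrow> real \<Rightarrow> real \<Rightarrow> real \<Rightarrow> real \<Rightarrow> real" where
  "Qf a b c x y = a * x^2 + b * x * y + c * y^2"

definition pol :: "real \<Rightarrow> real \<Rightarrow> real \<Rightarrow> real \<Rightarrow> real \<Rightarrow> real \<Rightarrow> real \<Rightarrow> real" where
  "pol a b c x1 y1 x2 y2 = 2 * a * x1 * x2 + b * (x1 * y2+y1 * x2) + 2 * c * y1 * y2"

lemma Qf_compose:
  "Qf a b c (s * x+p * y) (t * x+q * y) = Qf (Qf a b c s t) (pol a b c s t p q) (Qf a b c p q) x y"
  unfolding Qf_def pol_def by (simp add: power2_eq_square algebra_simps)

lemma disc_compose:
  "(pol a b c s t p q)^2 - 4 * Qf a b c s t * Qf a b c p q = (b^2-4 * a * c) * (s * q-t * p)^2"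
  unfolding Qf_def pol_def by (simp add: power2_eq_square algebra_simps)

lemma pol_shift:
  "pol a b c s t (p + m  *  s) (q + m * t) = pol a b c s t p q + 2 * m * Qf a b c s t"
  unfolding Qf_def pol_def by (simp add: power2_eq_square algebra_simps)

lemma Qf_roots:
  assumes "A \<noteq> 0" "B^2 - 4 * A * C = D^2"
  defines "e \<equiv> (-B + D)/(2 * A)" and "e' \<equiv> (-B - D)/(2 * A)"
  shows "Qf A B C x y = A  *  ((x - y * e)  *  (x - y * e'))" and "e - e' = D/A"
proof -
  have C: "C = (B^2 - D^2)/(4 * A)" using assms(1,2) by (simp add: field_simps)
  show "Qf A B C x y = A  *  ((x - y * e)  *  (x - y * e'))"
    unfolding Qf_def e_def e'_def C using assms(1)
    by (simp add: field_simps power2_eq_square)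
  show "e - e' = D/A" unfolding e_def e'_def using assms(1) by (simp add: field_simps)
qed

lemma P_Qf: "(x - y * u)  *  (x - y * v) = Qf 1 (-(u+v)) (u * v) x y"
  unfolding Qf_def by (simp add: power2_eq_square algebra_simps)

lemma floor_reduce:
  fixes a b N :: real
  assumes "a \<noteq> 0" "N > 0"
  shows "\<exists>m::int. \<bar>b + m * N * a\<bar> \<le> N * \<bar>a\<bar>"
proof -
  define x where "x = -b/(N * a)"
  define m where "m = \<lfloor>x\<rfloor>"
  have "b + m * N * a = (N * a) * (m - x)" unfolding x_def using assms by (simp add: field_simps)
  moreover have "\<bar>m - x\<bar> \<le> 1" unfolding m_def by linarith
  ultimately have "\<bar>b + m * N * a\<bar> = N * \<bar>a\<bar> * \<bar>m-x\<bar>" using assms by (simp add: abs_mult)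
  also have "\<dots> \<le> N * \<bar>a\<bar>" using \<open>\<bar>m - x\<bar> \<le> 1\<close> assms
    by (simp add: mult_left_le)
  finally show ?thesis by blast
qed

lemma strict_mono_enum: "infinite (S::nat set) \<Longrightarrow> strict_mono (enumerate S)"
  by (simp add: strict_mono_def)


lemma gcd_cong_mod:
  fixes u t :: int and n :: nat
  assumes "u mod int n = t mod int n"
  shows "gcd u (int n) = gcd t (int n)"
  by (metis assms gcd.commute gcd_red_int)

lemma core:
  fixes n :: nat and \<alpha> D a0 b0 c0 :: real
  assumes n: "n > 0" and D: "D > 0" and al: "\<alpha> > 0"
  and disc0: "b0^2 - 4 * a0 * c0 = D^2"
  and bnd: "\<And>s t::int. (s,t) \<noteq> (0,0) \<Longrightarrow> Qf a0 b0 c0 (of_int s) (of_int t) \<noteq> 0 \<and>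
      real_of_int (gcd t (int n)) * D / \<bar>Qf a0 b0 c0 (of_int s) (of_int t)\<bar> \<le> \<alpha>"
  and appr: "\<And>\<epsilon>. \<epsilon> > 0 \<Longrightarrow> \<exists>s t::int. coprime s t \<and>
      real_of_int (gcd t (int n)) * D / \<bar>Qf a0 b0 c0 (of_int s) (of_int t)\<bar> > \<alpha> - \<epsilon>"
  shows "\<exists>A B C (s0::int) (t0::int). A \<noteq> 0 \<and> B^2 - 4 * A * C = D^2 \<and> (s0,t0) \<noteq> (0,0) \<and>
     (\<forall>s t::int. (s,t) \<noteq> (0,0) \<longrightarrow> Qf A B C (of_int s) (of_int t) \<noteq> 0 \<and>
        real_of_int (gcd t (int n)) * D / \<bar>Qf A B C (of_int s) (of_int t)\<bar> \<le> \<alpha>) \<and>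
     real_of_int (gcd t0 (int n)) * D / \<bar>Qf A B C (of_int s0) (of_int t0)\<bar> = \<alpha>"
proof -
  define Q0 where "Q0 = Qf a0 b0 c0"
  define w where "w t = real_of_int (gcd t (int n))" for t :: int
  have w1: "w t \<ge> 1" for t unfolding w_def using n
    by (metis gcd_pos_int int_one_le_iff_zero_less less_numeral_extra(3) of_int_1_le_iff of_nat_0_less_iff)
  have wn: "w t \<le> n" for t unfolding w_def using n
    by (metis gcd_le2_int of_int_le_iff of_int_of_nat_eq of_nat_0_less_iff)
  have ex: "\<exists>p q::int. s * q - t * p = 1 \<and> \<bar>pol a0 b0 c0 s t p q\<bar> \<le> 2 * n * \<bar>Q0 s t\<bar>"
    if cop: "coprime s t" for s t :: int
  proof -
    obtain u v where "u * s + v * t = gcd s t" using bezout_int by blast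
    hence uv: "u * s + v * t = 1" using cop by simp
    have "(s,t) \<noteq> (0,0)" using cop by auto
    hence nz: "Q0 s t \<noteq> 0" using bnd unfolding Q0_def by blast
    obtain m::int where m: "\<bar>pol a0 b0 c0 s t (-v) u + m * (2 * real n) * Q0 s t\<bar> \<le> 2 * real n * \<bar>Q0 s t\<bar>"
      using floor_reduce[OF nz, of "2 * real n"] n by auto
    define p where "p = -v + m * int n * s"
    define q where "q = u + m * int n * t"
    have det: "s * q - t * p = 1" unfolding p_def q_def using uv by (simp add: algebra_simps)
    have "pol a0 b0 c0 s t p q = pol a0 b0 c0 s t (-v + (m * n) * s) (u + (m * n) * t)"
      unfolding p_def q_def by simp
    also have "\<dots> = pol a0 b0 c0 s t (-v) u + 2 * (m * n) * Q0 s t"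
      unfolding Q0_def using pol_shift[of a0 b0 c0 "real_of_int s" "real_of_int t" "- real_of_int v" "real_of_int m * real n" "real_of_int u"]
      by (simp add: algebra_simps)
    finally have "\<bar>pol a0 b0 c0 s t p q\<bar> \<le> 2 * n * \<bar>Q0 s t\<bar>" using m by (simp add: algebra_simps)
    thus ?thesis using det by blast
  qed
  define \<Phi> where "\<Phi> k s t p q \<longleftrightarrow> coprime s t \<and> \<alpha> - \<alpha>/(real k + 2) < w t * D / \<bar>Q0 s t\<bar> \<and>
      s * q - t * p = 1 \<and> \<bar>pol a0 b0 c0 s t p q\<bar> \<le> 2 * n * \<bar>Q0 s t\<bar>" for k :: nat and s t p q :: int
  have "\<forall>k::nat. \<exists>z. \<Phi> k (fst z) (fst (snd z)) (fst (snd (snd z))) (snd (snd (snd z)))"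
  proof
    fix k :: nat
    have "\<alpha>/(real k + 2) > 0" using al by simp
    then obtain s t where st: "coprime s t" "\<alpha> - \<alpha>/(real k + 2) < w t * D / \<bar>Q0 s t\<bar>"
      using appr unfolding w_def Q0_def by blast
    obtain p q where "s * q - t * p = 1 \<and> \<bar>pol a0 b0 c0 s t p q\<bar> \<le> 2 * n * \<bar>Q0 s t\<bar>"
      using ex[OF st(1)] by blast
    then have "\<Phi> k s t p q" using st unfolding \<Phi>_def by blast
    then show "\<exists>z. \<Phi> k (fst z) (fst (snd z)) (fst (snd (snd z))) (snd (snd (snd z)))"
      by (intro exI[of _ "(s,t,p,q)"]) simp
  qed
  from choice[OF this] obtain F where F: "\<forall>k. \<Phi> k (fst (F k)) (fst (snd (F k))) (fst (snd (snd (F k)))) (snd (snd (snd (F k))))"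
    by blast
  define S where "S k = fst (F k)" for k
  define T where "T k = fst (snd (F k))" for k
  define P where "P k = fst (snd (snd (F k)))" for k
  define R where "R k = snd (snd (snd (F k)))" for k
  have SR: "coprime (S k) (T k) \<and>
      \<alpha> - \<alpha>/(real k + 2) < w (T k) * D / \<bar>Q0 (S k) (T k)\<bar> \<and>
      S k * R k - T k * P k = 1 \<and> \<bar>pol a0 b0 c0 (S k) (T k) (P k) (R k)\<bar> \<le> 2 * n * \<bar>Q0 (S k) (T k)\<bar>" for k
    using F unfolding \<Phi>_def S_def T_def P_def R_def by blast
  define a where "a k = Q0 (S k) (T k)" for k
  define b where "b k = pol a0 b0 c0 (S k) (T k) (P k) (R k)" for k
  define c where "c k = Q0 (P k) (R k)" for k
  define tm where "tm k = w (T k) * D / \<bar>a k\<bar>" for k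
  have a0nz: "a k \<noteq> 0" for k
  proof -
    have "(S k, T k) \<noteq> (0,0)" using SR[of k] by auto
    thus ?thesis using bnd unfolding a_def Q0_def by blast
  qed
  have tm_le: "tm k \<le> \<alpha>" for k
  proof -
    have "(S k, T k) \<noteq> (0,0)" using SR[of k] by auto
    thus ?thesis using bnd unfolding tm_def a_def Q0_def w_def by blast
  qed
  have tm_gt: "\<alpha> - \<alpha>/(real k + 2) < tm k" for k using SR[of k] unfolding tm_def a_def by simp
  have tm_half: "\<alpha>/2 < tm k" for k
  proof -
    have "\<alpha>/(real k + 2) \<le> \<alpha>/2" using al by (intro divide_left_mono) auto
    thus ?thesis using tm_gt[of k] by linarith
  qed
  have disck: "(b k)^2 - 4 * a k * c k = D^2" for k
  proof -
    have "real_of_int (S k) * real_of_int (R k) - real_of_int (T k) * real_of_int (P k) = 1"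
      using SR[of k] by (metis of_int_1 of_int_diff of_int_mult)
    thus ?thesis unfolding a_def b_def c_def Q0_def using disc_compose[of a0 b0 c0] disc0 by simp
  qed
  define Ba where "Ba = 2 * n * D / \<alpha>"
  define Bb where "Bb = 2 * n * Ba"
  define Bc where "Bc = (Bb^2 + D^2) * \<alpha> / (4 * D)"
  have a_lo: "\<bar>a k\<bar> \<ge> D / \<alpha>" for k
  proof -
    have pos: "\<bar>a k\<bar> > 0" using a0nz by simp
    have "w (T k) * D / \<bar>a k\<bar> \<le> \<alpha>" using tm_le[of k] unfolding tm_def .
    hence "w (T k) * D \<le> \<alpha> * \<bar>a k\<bar>" using pos by (simp add: divide_le_eq)
    moreover have "D \<le> w (T k) * D" using w1[of "T k"] D by simp
    ultimately have "D \<le> \<alpha> * \<bar>a k\<bar>" by linarith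
    thus ?thesis using al by (simp add: divide_le_eq mult.commute)
  qed
  have a_hi: "\<bar>a k\<bar> \<le> Ba" for k
  proof -
    have pos: "\<bar>a k\<bar> > 0" using a0nz by simp
    have "\<alpha>/2 < w (T k) * D / \<bar>a k\<bar>" using tm_half[of k] unfolding tm_def .
    hence "\<alpha>/2 * \<bar>a k\<bar> < w (T k) * D" using pos by (simp add: less_divide_eq)
    moreover have "w (T k) * D \<le> n * D" using wn[of "T k"] D by simp
    ultimately have "\<alpha> * \<bar>a k\<bar> \<le> 2 * n * D" by linarith
    thus ?thesis unfolding Ba_def using al by (simp add: le_divide_eq mult.commute)
  qed
  have b_hi: "\<bar>b k\<bar> \<le> Bb" for k
  proof -
    have "\<bar>b k\<bar> \<le> 2 * n * \<bar>a k\<bar>" using SR[of k] unfolding b_def a_def by simp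
    also have "\<dots> \<le> 2 * n * Ba" using a_hi[of k] by (simp add: mult_left_mono)
    finally show ?thesis unfolding Bb_def .
  qed
  have c_hi: "\<bar>c k\<bar> \<le> Bc" for k
  proof -
    have "4 * a k * c k = (b k)^2 - D^2" using disck[of k] by simp
    moreover have "(b k)^2 \<ge> 0" "D^2 \<ge> 0" by simp_all
    ultimately have "\<bar>4 * a k * c k\<bar> \<le> (b k)^2 + D^2" by linarith
    also have "(b k)^2 \<le> Bb^2"
    proof -
      have "(b k)^2 = \<bar>b k\<bar>^2" by simp
      also have "\<dots> \<le> Bb^2" by (rule power_mono) (use b_hi[of k] in auto)
      finally show ?thesis .
    qed
    finally have 1: "4 * \<bar>a k\<bar> * \<bar>c k\<bar> \<le> Bb^2 + D^2" by (simp add: abs_mult)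
    have "4 * (D/\<alpha>) * \<bar>c k\<bar> \<le> 4 * \<bar>a k\<bar> * \<bar>c k\<bar>"
    proof -
      have "(D/\<alpha>) * \<bar>c k\<bar> \<le> \<bar>a k\<bar> * \<bar>c k\<bar>" by (rule mult_right_mono[OF a_lo]) simp
      thus ?thesis by (simp only: mult.assoc)
    qed
    with 1 have 2: "4 * (D/\<alpha>) * \<bar>c k\<bar> \<le> Bb^2 + D^2" by linarith
    have "4 * (D/\<alpha>) * \<bar>c k\<bar> * \<alpha> = \<bar>c k\<bar> * (4 * D)" using al by simp
    moreover have "4 * (D/\<alpha>) * \<bar>c k\<bar> * \<alpha> \<le> (Bb^2 + D^2) * \<alpha>"
      by (rule mult_right_mono[OF 2]) (use al in simp)
    ultimately have "\<bar>c k\<bar> * (4 * D) \<le> (Bb^2 + D^2) * \<alpha>" by simp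
    thus ?thesis unfolding Bc_def using D by (simp add: le_divide_eq)
  qed
  define res where "res k = (S k mod int n, T k mod int n, P k mod int n, R k mod int n)" for k
  have "range res \<subseteq> {0..<int n} \<times> {0..<int n} \<times> {0..<int n} \<times> {0..<int n}"
    unfolding res_def using n by auto
  hence fin: "finite (range res)" by (rule finite_subset) auto
  obtain k1 where "infinite {k \<in> UNIV. res k = res k1}"
    using pigeonhole_infinite[OF infinite_UNIV_nat fin] by blast
  then have infK: "infinite {k. res k = res k1}" by simp
  define r where "r = enumerate {k. res k = res k1}"
  have r_mono: "strict_mono r" unfolding r_def using infK by (simp add: strict_mono_def)
  have r_res: "res (r k) = res k1" for k unfolding r_def using enumerate_in_set[OF infK] by blast
  define X where "X k = (a (r k), b (r k), c (r k))" for k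
  have "bounded (range X)"
  proof (rule boundedI)
    fix x assume "x \<in> range X"
    then obtain k where x: "x = X k" by blast
    have "norm x \<le> norm (a (r k)) + norm (b (r k), c (r k))" unfolding x X_def by (rule norm_Pair_le)
    also have "\<dots> \<le> norm (a (r k)) + (norm (b (r k)) + norm (c (r k)))"
      using norm_Pair_le by (metis add_left_mono)
    also have "\<dots> \<le> Ba + (Bb + Bc)" using a_hi b_hi c_hi by (simp add: add_mono)
    finally show "norm x \<le> Ba + (Bb + Bc)" .
  qed
  then obtain l \<sigma> where \<sigma>: "strict_mono \<sigma>" and lim: "(X \<circ> \<sigma>) \<longlonglongrightarrow> l"
    using bounded_imp_convergent_subsequence by blast
  define \<phi> where "\<phi> = r \<circ> \<sigma>"
  have \<phi>_mono: "strict_mono \<phi>" unfolding \<phi>_def using r_mono \<sigma> by (rule strict_mono_o)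
  define ai where "ai = fst l"
  define bi where "bi = fst (snd l)"
  define ci where "ci = snd (snd l)"
  have la: "(\<lambda>k. a (\<phi> k)) \<longlonglongrightarrow> ai"
    using tendsto_fst[OF lim] unfolding ai_def \<phi>_def X_def comp_def by simp
  have lb: "(\<lambda>k. b (\<phi> k)) \<longlonglongrightarrow> bi"
    using tendsto_fst[OF tendsto_snd[OF lim]] unfolding bi_def \<phi>_def X_def comp_def by simp
  have lc: "(\<lambda>k. c (\<phi> k)) \<longlonglongrightarrow> ci"
    using tendsto_snd[OF tendsto_snd[OF lim]] unfolding ci_def \<phi>_def X_def comp_def by simp
  have \<phi>_res: "res (\<phi> k) = res (\<phi> 0)" for k unfolding \<phi>_def comp_def using r_res by simp
  define k0 where "k0 = \<phi> 0"
  define s0 where "s0 = S k0"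
  define t0 where "t0 = T k0"
  define p0 where "p0 = P k0"
  define q0 where "q0 = R k0"
  have det0: "s0 * q0 - t0 * p0 = 1" unfolding s0_def t0_def p0_def q0_def using SR by blast
  have discl: "bi^2 - 4 * ai * ci = D^2"
  proof -
    have "(\<lambda>k. (b (\<phi> k))^2 - 4 * a (\<phi> k) * c (\<phi> k)) \<longlonglongrightarrow> bi^2 - 4 * ai * ci"
      by (intro tendsto_intros la lb lc)
    moreover have "(\<lambda>k. (b (\<phi> k))^2 - 4 * a (\<phi> k) * c (\<phi> k)) = (\<lambda>k. D^2)" using disck by simp
    ultimately show ?thesis using LIMSEQ_unique tendsto_const by metis
  qed
  have ai_lo: "\<bar>ai\<bar> \<ge> D/\<alpha>"
    using LIMSEQ_le_const[OF tendsto_rabs[OF la], of "D/\<alpha>"] a_lo by blast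
  have ainz: "ai \<noteq> 0" using ai_lo D al
    by (metis abs_zero divide_pos_pos not_less)
  define A where "A = Qf ai bi ci (of_int q0) (- of_int t0)"
  define B where "B = pol ai bi ci (of_int q0) (- of_int t0) (- of_int p0) (of_int s0)"
  define C where "C = Qf ai bi ci (- of_int p0) (of_int s0)"
  have Hdef: "Qf A B C x y = Qf ai bi ci (of_int q0 * x + (- of_int p0) * y) ((- of_int t0) * x + of_int s0 * y)" for x y :: real
    unfolding A_def B_def C_def by (rule Qf_compose[symmetric])
  have discH: "B^2 - 4 * A * C = D^2"
  proof -
    have "real_of_int q0 * real_of_int s0 - (- real_of_int t0) * (- real_of_int p0) = 1"
      using det0 by (metis mult.commute mult_minus_left mult_minus_right minus_minus of_int_1 of_int_diff of_int_mult)
    thus ?thesis unfolding A_def B_def C_def using disc_compose[of ai bi ci] discl by simp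
  qed
  have claim: "Qf A B C (of_int s) (of_int t) \<noteq> 0 \<and> w t * D / \<bar>Qf A B C (of_int s) (of_int t)\<bar> \<le> \<alpha>"
    if st: "(s,t) \<noteq> (0,0)" for s t :: int
  proof -
    define x where "x = q0 * s - p0 * t"
    define y where "y = - t0 * s + s0 * t"
    have sx: "s = s0 * x + p0 * y" "t = t0 * x + q0 * y"
    proof -
      have "s0 * x + p0 * y = (s0 * q0 - t0 * p0) * s" "t0 * x + q0 * y = (s0 * q0 - t0 * p0) * t"
        unfolding x_def y_def by (simp_all add: algebra_simps)
      thus "s = s0 * x + p0 * y" "t = t0 * x + q0 * y" using det0 by simp_all
    qed
    have xy: "(x,y) \<noteq> (0,0)" using st sx by auto
    have Hxy: "Qf A B C (of_int s) (of_int t) = Qf ai bi ci (of_int x) (of_int y)"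
      unfolding Hdef x_def y_def by (simp add: algebra_simps)
    have bound_k: "w t * D / \<alpha> \<le> \<bar>Qf (a (\<phi> k)) (b (\<phi> k)) (c (\<phi> k)) (of_int x) (of_int y)\<bar>" for k
    proof -
      define j where "j = \<phi> k"
      have rj: "res j = res k0" unfolding j_def k0_def using \<phi>_res by simp
      define V1 where "V1 = S j * x + P j * y"
      define V2 where "V2 = T j * x + R j * y"
      have detj: "S j * R j - T j * P j = 1" using SR by blast
      have "x = R j * V1 - P j * V2" "y = - T j * V1 + S j * V2"
      proof -
        have "R j * V1 - P j * V2 = (S j * R j - T j * P j) * x" "- T j * V1 + S j * V2 = (S j * R j - T j * P j) * y"
          unfolding V1_def V2_def by (simp_all add: algebra_simps)
        thus "x = R j * V1 - P j * V2" "y = - T j * V1 + S j * V2" using detj by simp_all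
      qed
      hence V: "(V1, V2) \<noteq> (0,0)" using xy by auto
      have "T j mod int n = t0 mod int n" "R j mod int n = q0 mod int n"
        using rj unfolding res_def t0_def q0_def by auto
      hence "V2 mod int n = (t0 * x + q0 * y) mod int n"
        unfolding V2_def by (metis mod_add_cong mod_mult_cong)
      hence wV: "w V2 = w t" unfolding w_def sx(2) using gcd_cong_mod by metis
      have QV: "Q0 V1 V2 = Qf (a j) (b j) (c j) (of_int x) (of_int y)"
        unfolding V1_def V2_def Q0_def a_def b_def c_def using Qf_compose by simp
      have "Q0 V1 V2 \<noteq> 0" "w V2 * D / \<bar>Q0 V1 V2\<bar> \<le> \<alpha>" using bnd[OF V] unfolding Q0_def w_def by auto
      hence "w t * D \<le> \<alpha> * \<bar>Q0 V1 V2\<bar>" using wV by (simp add: divide_le_eq)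
      hence "w t * D / \<alpha> \<le> \<bar>Q0 V1 V2\<bar>" using al by (simp add: divide_le_eq mult.commute)
      thus ?thesis using QV unfolding j_def by simp
    qed
    have "(\<lambda>k. Qf (a (\<phi> k)) (b (\<phi> k)) (c (\<phi> k)) (of_int x) (of_int y)) \<longlonglongrightarrow> Qf ai bi ci (of_int x) (of_int y)"
      unfolding Qf_def by (intro tendsto_intros la lb lc)
    hence ge: "w t * D / \<alpha> \<le> \<bar>Qf ai bi ci (of_int x) (of_int y)\<bar>"
      using LIMSEQ_le_const[OF tendsto_rabs] bound_k by blast
    have pos: "w t * D / \<alpha> > 0" using w1[of t] D al by simp
    have absp: "\<bar>Qf ai bi ci (of_int x) (of_int y)\<bar> > 0" using ge pos by linarith
    have "w t * D \<le> \<bar>Qf ai bi ci (of_int x) (of_int y)\<bar> * \<alpha>" using ge pos_divide_le_eq[OF al] by blast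
    hence "w t * D / \<bar>Qf ai bi ci (of_int x) (of_int y)\<bar> \<le> \<alpha>"
      using pos_divide_le_eq[OF absp] by (simp add: mult.commute)
    thus ?thesis unfolding Hxy using absp by simp
  qed
  have tm_lim: "tm \<longlonglongrightarrow> \<alpha>"
  proof (rule tendsto_sandwich[of "\<lambda>k. \<alpha> - \<alpha>/(real k + 2)" _ _ "\<lambda>k. \<alpha>"])
    show "\<forall>\<^sub>F k in sequentially. \<alpha> - \<alpha> / (real k + 2) \<le> tm k" by (intro always_eventually allI less_imp_le tm_gt)
    show "\<forall>\<^sub>F k in sequentially. tm k \<le> \<alpha>" by (intro always_eventually allI tm_le)
    show "(\<lambda>k. \<alpha> - \<alpha> / (real k + 2)) \<longlonglongrightarrow> \<alpha>" by real_asymp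
  qed simp
  have wt0: "w (T (\<phi> k)) = w t0" for k
  proof -
    have "T (\<phi> k) mod int n = t0 mod int n" using \<phi>_res[of k] unfolding res_def t0_def k0_def by auto
    thus ?thesis unfolding w_def using gcd_cong_mod by metis
  qed
  have "(\<lambda>k. tm (\<phi> k)) \<longlonglongrightarrow> \<alpha>" using LIMSEQ_subseq_LIMSEQ[OF tm_lim \<phi>_mono] by (simp add: comp_def)
  moreover have "(\<lambda>k. tm (\<phi> k)) \<longlonglongrightarrow> w t0 * D / \<bar>ai\<bar>"
    unfolding tm_def wt0 using ainz by (intro tendsto_intros la) simp
  ultimately have eq: "w t0 * D / \<bar>ai\<bar> = \<alpha>" using LIMSEQ_unique by metis
  have H0: "Qf A B C (of_int s0) (of_int t0) = ai"
  proof -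
    have "Qf A B C (of_int s0) (of_int t0) = Qf ai bi ci (of_int (q0 * s0 - p0 * t0)) (of_int (- t0 * s0 + s0 * t0))"
      unfolding Hdef by (simp add: algebra_simps)
    also have "\<dots> = Qf ai bi ci 1 0" using det0 by (simp add: algebra_simps)
    finally show ?thesis unfolding Qf_def by simp
  qed
  have "(1::int, 0::int) \<noteq> (0,0)" by simp
  from claim[OF this] have Anz: "A \<noteq> 0" unfolding Qf_def by simp
  have s0t0: "(s0, t0) \<noteq> (0,0)" using det0 by auto
  show ?thesis
    apply (rule exI[of _ A], rule exI[of _ B], rule exI[of _ C], rule exI[of _ s0], rule exI[of _ t0])
    using Anz discH s0t0 claim eq H0 unfolding w_def by auto
qed


lemma gcd_scale_le:
  fixes g t :: int and n :: nat
  assumes g: "g > 0" and n: "n > 0"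
  shows "gcd (g * t) (int n) \<le> g * g * gcd t (int n)"
proof -
  have "gcd (g * t) (int n) dvd gcd (g * t) (g * int n)"
    by (rule gcd_greatest) (simp, rule dvd_mult, rule gcd_dvd2)
  also have "gcd (g * t) (g * int n) = g * gcd t (int n)"
    using gcd_mult_distrib_int[of g t "int n"] g by simp
  finally have d: "gcd (g * t) (int n) dvd g * gcd t (int n)" .
  have pos: "g * gcd t (int n) > 0" using g n by simp
  have "\<bar>gcd (g * t) (int n)\<bar> \<le> \<bar>g * gcd t (int n)\<bar>"
    by (rule dvd_imp_le_int[OF _ d]) (use pos in linarith)
  hence 1: "gcd (g * t) (int n) \<le> g * gcd t (int n)" using pos by linarith
  have "g \<le> g * g" using g by (simp add: mult_le_cancel_left1)
  hence "g * gcd t (int n) \<le> (g * g) * gcd t (int n)"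
    by (rule mult_right_mono) simp
  with 1 show ?thesis by linarith
qed

lemma mu_term_Qf:
  fixes A B C D :: real
  assumes A: "A \<noteq> 0" and D: "D > 0" and disc: "B^2 - 4 * A * C = D^2"
  and nz: "Qf A B C (of_int s) (of_int t) \<noteq> 0"
  shows "mu_term n ((-B + D)/(2 * A)) ((-B - D)/(2 * A)) s t =
    ereal (real_of_int (gcd t (int n)) * D / \<bar>Qf A B C (of_int s) (of_int t)\<bar>)"
proof -
  define e where "e = (-B + D)/(2 * A)"
  define e' where "e' = (-B - D)/(2 * A)"
  have Q: "Qf A B C (of_int s) (of_int t) = A * ((of_int s - of_int t * e) * (of_int s - of_int t * e'))"
    using Qf_roots(1)[OF A disc] unfolding e_def e'_def by blast
  have de: "e - e' = D / A" using Qf_roots(2)[OF A disc] unfolding e_def e'_def by blast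
  have prod: "\<bar>of_int s - of_int t * e\<bar> * \<bar>of_int s - of_int t * e'\<bar> = \<bar>Qf A B C (of_int s) (of_int t)\<bar> / \<bar>A\<bar>"
    using A unfolding Q by (simp add: abs_mult)
  have pnz: "\<bar>of_int s - of_int t * e\<bar> * \<bar>of_int s - of_int t * e'\<bar> \<noteq> 0"
    unfolding prod using nz A by simp
  have "real_of_int (gcd t (int n)) * \<bar>e - e'\<bar> / (\<bar>of_int s - of_int t * e\<bar> * \<bar>of_int s - of_int t * e'\<bar>)
      = real_of_int (gcd t (int n)) * D / \<bar>Qf A B C (of_int s) (of_int t)\<bar>"
    unfolding prod de using A D nz by (simp add: abs_div)
  thus ?thesis using pnz unfolding mu_term_def e_def e'_def by simp
qed

theorem proposition3p5:
  fixes n :: nat and \<alpha> :: real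
  assumes "n > 0" and "\<alpha> \<in> M n"
  shows "\<exists>\<xi> \<xi>'. \<xi> \<noteq> \<xi>' \<and> mu n \<xi> \<xi>' = ereal \<alpha> \<and>
           (\<exists>s t. (s, t) \<noteq> (0, 0) \<and> mu_term n \<xi> \<xi>' s t = mu n \<xi> \<xi>')"
proof -
  note n = assms(1)
  obtain x x' where xx: "x \<noteq> x'" and mux: "mu n x x' = ereal \<alpha>" using assms(2) unfolding M_def by blast
  define D where "D = \<bar>x - x'\<bar>"
  have D: "D > 0" unfolding D_def using xx by simp
  define a0 where "a0 = (1::real)"
  define b0 where "b0 = - (x + x')"
  define c0 where "c0 = x * x'"
  have disc0: "b0^2 - 4 * a0 * c0 = D^2" unfolding a0_def b0_def c0_def D_def
    by (simp add: power2_eq_square algebra_simps)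
  have Qx: "Qf a0 b0 c0 (of_int s) (of_int t) = (of_int s - of_int t * x) * (of_int s - of_int t * x')" for s t :: int
    unfolding a0_def b0_def c0_def by (rule P_Qf[symmetric])
  have le_mu: "mu_term n x x' s t \<le> ereal \<alpha>" if "(s,t) \<noteq> (0,0)" for s t
  proof -
    have "mu_term n x x' s t \<le> mu n x x'" unfolding mu_def
      by (rule SUP_upper2[of "(s,t)"]) (use that in auto)
    thus ?thesis using mux by simp
  qed
  have bnd: "Qf a0 b0 c0 (of_int s) (of_int t) \<noteq> 0 \<and>
      real_of_int (gcd t (int n)) * D / \<bar>Qf a0 b0 c0 (of_int s) (of_int t)\<bar> \<le> \<alpha>"
    if st: "(s,t) \<noteq> (0,0)" for s t :: int
  proof -
    have l: "mu_term n x x' s t \<le> ereal \<alpha>" using le_mu[OF st] .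
    have nz: "\<bar>of_int s - of_int t * x\<bar> * \<bar>of_int s - of_int t * x'\<bar> \<noteq> 0"
      using l unfolding mu_term_def by (auto split: if_splits)
    hence "mu_term n x x' s t = ereal (real_of_int (gcd t (int n)) * D / \<bar>Qf a0 b0 c0 (of_int s) (of_int t)\<bar>)"
      unfolding mu_term_def Qx D_def by (simp add: abs_mult)
    with l nz show ?thesis unfolding Qx by (simp add: abs_mult)
  qed
  have termeq: "mu_term n x x' s t = ereal (real_of_int (gcd t (int n)) * D / \<bar>Qf a0 b0 c0 (of_int s) (of_int t)\<bar>)"
    if st: "(s,t) \<noteq> (0,0)" for s t :: int
  proof -
    have "\<bar>of_int s - of_int t * x\<bar> * \<bar>of_int s - of_int t * x'\<bar> \<noteq> 0"
      using bnd[OF st] unfolding Qx by (simp add: abs_mult)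
    thus ?thesis unfolding mu_term_def Qx D_def by (simp add: abs_mult)
  qed
  have al: "\<alpha> > 0"
  proof -
    have "(1::int, 0::int) \<noteq> (0,0)" by simp
    from bnd[OF this] have "0 < real_of_int (gcd 0 (int n)) * D / \<bar>Qf a0 b0 c0 1 0\<bar>"
      using n D by simp
    also have "\<dots> \<le> \<alpha>" using bnd[of 1 0] by simp
    finally show ?thesis .
  qed
  have appr: "\<exists>s t::int. coprime s t \<and>
      real_of_int (gcd t (int n)) * D / \<bar>Qf a0 b0 c0 (of_int s) (of_int t)\<bar> > \<alpha> - \<epsilon>"
    if eps: "\<epsilon> > 0" for \<epsilon>
  proof -
    have "ereal (\<alpha> - \<epsilon>) < mu n x x'" using mux eps by simp
    then obtain st where st: "st \<in> UNIV - {(0,0)}" and lt: "ereal (\<alpha> - \<epsilon>) < mu_term n x x' (fst st) (snd st)"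
      unfolding mu_def less_SUP_iff by blast
    obtain s t where st_eq: "st = (s,t)" by (cases st)
    have nz: "(s,t) \<noteq> (0,0)" using st st_eq by simp
    have lt2: "\<alpha> - \<epsilon> < real_of_int (gcd t (int n)) * D / \<bar>Qf a0 b0 c0 (of_int s) (of_int t)\<bar>"
      using lt termeq[OF nz] st_eq by simp
    define g where "g = gcd s t"
    have g: "g > 0" unfolding g_def using nz by auto
    define s' where "s' = s div g"
    define t' where "t' = t div g"
    have cop: "coprime s' t'" unfolding s'_def t'_def g_def using nz by (intro div_gcd_coprime) auto
    have ss: "s = g * s'" "t = g * t'" unfolding s'_def t'_def g_def by simp_all
    have nz': "(s',t') \<noteq> (0,0)" using nz ss by auto
    have Qs: "Qf a0 b0 c0 (of_int s) (of_int t) = (of_int g)^2 * Qf a0 b0 c0 (of_int s') (of_int t')"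
      unfolding ss Qf_def by (simp add: power2_eq_square algebra_simps)
    have Qnz: "\<bar>Qf a0 b0 c0 (of_int s') (of_int t')\<bar> > 0" using bnd[OF nz'] by simp
    have gl: "real_of_int (gcd t (int n)) \<le> (of_int g)^2 * real_of_int (gcd t' (int n))"
      using gcd_scale_le[OF g n, of t'] unfolding ss(2) power2_eq_square
      by (metis of_int_le_iff of_int_mult)
    have "real_of_int (gcd t (int n)) * D / \<bar>Qf a0 b0 c0 (of_int s) (of_int t)\<bar>
        = (real_of_int (gcd t (int n)) / (of_int g)^2) * D / \<bar>Qf a0 b0 c0 (of_int s') (of_int t')\<bar>"
      unfolding Qs using g by (simp add: abs_mult)
    also have "\<dots> \<le> real_of_int (gcd t' (int n)) * D / \<bar>Qf a0 b0 c0 (of_int s') (of_int t')\<bar>"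
    proof -
      have "real_of_int (gcd t (int n)) / (of_int g)^2 \<le> real_of_int (gcd t' (int n))"
        using gl g by (simp add: divide_le_eq mult.commute)
      thus ?thesis using Qnz D by (intro divide_right_mono mult_right_mono) auto
    qed
    finally show ?thesis using lt2 cop by (intro exI[of _ s'] exI[of _ t']) auto
  qed
  obtain A B C s0 t0 where A: "A \<noteq> 0" and disc: "B^2 - 4 * A * C = D^2" and s0t0: "(s0::int,t0::int) \<noteq> (0,0)"
    and cl: "\<forall>s t::int. (s,t) \<noteq> (0,0) \<longrightarrow> Qf A B C (of_int s) (of_int t) \<noteq> 0 \<and>
        real_of_int (gcd t (int n)) * D / \<bar>Qf A B C (of_int s) (of_int t)\<bar> \<le> \<alpha>"
    and eq: "real_of_int (gcd t0 (int n)) * D / \<bar>Qf A B C (of_int s0) (of_int t0)\<bar> = \<alpha>"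
    using core[OF n D al disc0 bnd appr] by blast
  define e where "e = (-B + D)/(2 * A)"
  define e' where "e' = (-B - D)/(2 * A)"
  have ne: "e \<noteq> e'" using Qf_roots(2)[OF A disc] A D unfolding e_def e'_def by auto
  have tm: "mu_term n e e' s t = ereal (real_of_int (gcd t (int n)) * D / \<bar>Qf A B C (of_int s) (of_int t)\<bar>)"
    if "(s,t) \<noteq> (0,0)" for s t
    unfolding e_def e'_def using mu_term_Qf[OF A D disc] cl that by blast
  have t0eq: "mu_term n e e' s0 t0 = ereal \<alpha>" using tm[OF s0t0] eq by simp
  have mueq: "mu n e e' = ereal \<alpha>"
  proof (rule antisym)
    show "mu n e e' \<le> ereal \<alpha>" unfolding mu_def
    proof (rule SUP_least)
      fix st :: "int \<times> int" assume "st \<in> UNIV - {(0,0)}"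
      then obtain s t where st: "st = (s,t)" "(s,t) \<noteq> (0,0)" by (cases st) auto
      show "mu_term n e e' (fst st) (snd st) \<le> ereal \<alpha>" using tm[OF st(2)] cl st by simp
    qed
    show "ereal \<alpha> \<le> mu n e e'" unfolding mu_def
      by (rule SUP_upper2[of "(s0,t0)"]) (use s0t0 t0eq in auto)
  qed
  show ?thesis using ne mueq t0eq s0t0 by (intro exI[of _ e] exI[of _ e']) auto
qed

end
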